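(* Fix a round with load $v>0$ for agent $i$. Suppose the allocation is the MMF output for entitlements $e$, where agent $i$'s reported demand is $d_i=\hat\rho\,v$ for some $\hat\rho\ge0$ and the other agents' reported demands are arbitrary, and let $a_i$ be agent $i$'s allocation. Let $\bar\rho\ge\max(\rho_i,\hat\rho)$. Then $u_i(e_i/v)-u_i(a_i/v)\le L_i(\bar\rho-\hat\rho)$.
   Context: A divisible resource of size $1$ is shared by $n$ agents with entitlements $e_i>0$, $\sum_ie_i=1$. MMF$(e,d)$ on reported demands $d_1,\dots,d_n\ge0$: set $r=1$, $E=1$, $S=\{1,\dots,n\}$, $a=0$; process agents $j$ in ascending order of $d_j/e_j$; if $d_j<re_j/E$, set $a_j=d_j$, remove $j$ from $S$, $r\leftarrow r-d_j$, $E\leftarrow E-e_j$ and continue; otherwise set $a_k=re_k/E$ for all $k\in S$ and stop; output $a$. Agent $i$ has unit demand (demand per unit load) $\rho_i\ge0$ and a utility $u_i$ of allocation per unit load that is strictly increasing on $[0,\rho_i]$, constant on $[\rho_i,\infty)$, and $L_i$-Lipschitz. *)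

theory Defs
  imports "HOL-Analysis.Analysis"
begin

text \<open>Agents are processed along the list \<open>js\<close>
  (an ordering of all agents by ascending d_j/e_j); \<open>r\<close> is the remaining
  resource and \<open>E\<close> the remaining entitlement.\<close>
fun mmf_aux :: "(nat \<Rightarrow> real) \<Rightarrow> (nat \<Rightarrow> real) \<Rightarrow> nat list \<Rightarrow> real \<Rightarrow> real \<Rightarrow> (nat \<Rightarrow> real)" where
  "mmf_aux e d [] r E = (\<lambda>k. 0)"
| "mmf_aux e d (j # js) r E =
     (if d j < r * e j / E
      then (mmf_aux e d js (r - d j) (E - e j))(j := d j)
      else (\<lambda>k. if k \<in> set (j # js) then r * e k / E else 0))"

definition mmf_order :: "nat \<Rightarrow> (nat \<Rightarrow> real) \<Rightarrow> (nat \<Rightarrow> real) \<Rightarrow> nat list \<Rightarrow> bool" where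
  "mmf_order n e d ord \<longleftrightarrow> distinct ord \<and> set ord = {..<n} \<and>
     sorted_wrt (\<lambda>j k. d j / e j \<le> d k / e k) ord"

definition MMF :: "(nat \<Rightarrow> real) \<Rightarrow> (nat \<Rightarrow> real) \<Rightarrow> nat list \<Rightarrow> (nat \<Rightarrow> real)" where
  "MMF e d ord = mmf_aux e d ord 1 1"

end

theory Submission
  imports Defs
begin

lemma mmf_aux_ge:
  "distinct js \<Longrightarrow> \<forall>k\<in>set js. e k > 0 \<Longrightarrow> E = (\<Sum>k\<in>set js. e k) \<Longrightarrow> r \<ge> E
   \<Longrightarrow> i \<in> set js \<Longrightarrow> mmf_aux e d js r E i \<ge> min (d i) (e i)"
proof (induction js arbitrary: r E)
  case Nil
  then show ?case by simp
next
  case (Cons j js)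
  have ej: "e j > 0" using Cons.prems by simp
  have E': "(\<Sum>k\<in>set js. e k) = E - e j" using Cons.prems by (simp add: sum.insert)
  have nn: "(\<Sum>k\<in>set js. e k) \<ge> 0" using Cons.prems by (intro sum_nonneg) auto
  have Epos: "E > 0" using ej E' nn by linarith
  have rE: "r / E \<ge> 1" using Cons.prems Epos by simp
  show ?case
  proof (cases "d j < r * e j / E")
    case True
    show ?thesis
    proof (cases "i = j")
      case True
      then show ?thesis using \<open>d j < r * e j / E\<close> by simp
    next
      case False
      have ijs: "i \<in> set js" using False Cons.prems by simp
      have E'pos: "E - e j > 0"
      proof -
        have "(\<Sum>k\<in>set js. e k) > 0" using ijs Cons.prems
          by (intro sum_pos) auto
        then show ?thesis using E' by simp
      qed
      have "1 * (E - e j) \<le> (r / E) * (E - e j)"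
        using rE E'pos by (intro mult_right_mono) auto
      also have "(r / E) * (E - e j) = r - r * e j / E" using Epos by (simp add: field_simps)
      also have "r - r * e j / E < r - d j" using True by simp
      finally have "r - d j \<ge> E - e j" by simp
      then have "mmf_aux e d js (r - d j) (E - e j) i \<ge> min (d i) (e i)"
        using Cons.IH[of "E - e j" "r - d j"] Cons.prems ijs E' by simp
      then show ?thesis using True False by simp
    qed
  next
    case False
    have "r * e i / E = (r / E) * e i" by simp
    also have "\<dots> \<ge> 1 * e i" using rE Cons.prems by (intro mult_right_mono) auto
    finally show ?thesis using False Cons.prems by simp
  qed
qed

theorem lemma3:
  fixes n :: nat and i :: nat and e d :: "nat \<Rightarrow> real" and ord :: "nat list"
    and u :: "real \<Rightarrow> real" and \<rho> L v \<rho>hat \<rho>bar :: real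
  assumes "i < n"
    and "\<forall>k<n. e k > 0" and "(\<Sum>k<n. e k) = 1"
    and "\<forall>k<n. d k \<ge> 0"
    and "mmf_order n e d ord"
    and "v > 0" and "\<rho>hat \<ge> 0" and "d i = \<rho>hat * v"
    and "\<rho> \<ge> 0"
    and "strict_mono_on {0..\<rho>} u"
    and "\<forall>x\<ge>\<rho>. u x = u \<rho>"
    and "L-lipschitz_on {0..} u"
    and "\<rho>bar \<ge> max \<rho> \<rho>hat"
  shows "u (e i / v) - u (MMF e d ord i / v) \<le> L * (\<rho>bar - \<rho>hat)"
proof -
  let ?a = "MMF e d ord i"
  have so: "set ord = {..<n}" "distinct ord" using assms(5) unfolding mmf_order_def by auto
  have ge: "?a \<ge> min (d i) (e i)" unfolding MMF_def
    using mmf_aux_ge[of ord e 1 1 i d] so assms(1,2,3) by auto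
  have mono: "u x \<le> u y" if "0 \<le> x" "x \<le> y" for x y
  proof -
    have m: "u x \<le> u y" if "0 \<le> x" "x \<le> y" "y \<le> \<rho>" for x y
    proof (cases "x = y")
      case False
      then have "x < y" using that by simp
      have "x \<in> {0..\<rho>}" "y \<in> {0..\<rho>}" using that by auto
      then have "u x < u y" using assms(10) \<open>x < y\<close> unfolding strict_mono_on_def by blast
      then show ?thesis by simp
    qed simp
    show ?thesis
    proof (cases "y \<le> \<rho>")
      case True show ?thesis using m[OF that(1) that(2) True] by simp
    next
      case False
      then have uy: "u y = u \<rho>" using assms(11) by (meson less_imp_le not_le)
      show ?thesis
      proof (cases "x \<le> \<rho>")
        case True then show ?thesis using m[OF that(1) True order_refl] uy by simp
      next
        case False then have "u x = u \<rho>" using assms(11) by (meson less_imp_le not_le)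
        then show ?thesis using uy by simp
      qed
    qed
  qed
  have L0: "L \<ge> 0" using assms(12) by (simp add: lipschitz_on_def)
  have ei: "e i > 0" using assms(1,2) by auto
  have top: "u x \<le> u \<rho>bar" if "x \<ge> 0" for x
  proof -
    have "u \<rho>bar = u \<rho>" using assms(11,13) by (meson max.boundedE)
    moreover have "u x \<le> u (max x \<rho>)" by (rule mono) (use that in auto)
    moreover have "u (max x \<rho>) = u \<rho>" using assms(11) by (meson max.cobounded2)
    ultimately show ?thesis by simp
  qed
  show ?thesis
  proof (cases "?a \<ge> e i")
    case True
    have "u (e i / v) \<le> u (?a / v)" using mono ei assms(6) True
      by (simp add: divide_right_mono)
    moreover have "L * (\<rho>bar - \<rho>hat) \<ge> 0" using L0 assms(13) by simp
    ultimately show ?thesis by linarith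
  next
    case False
    then have "?a \<ge> d i" using ge by linarith
    then have "?a / v \<ge> \<rho>hat" using assms(6,8) by (simp add: field_simps)
    then have "u (?a / v) \<ge> u \<rho>hat" using mono[OF assms(7)] by blast
    moreover have "u (e i / v) \<le> u \<rho>bar" using top ei assms(6) by simp
    moreover have "u \<rho>bar - u \<rho>hat \<le> L * (\<rho>bar - \<rho>hat)"
    proof -
      have "dist (u \<rho>bar) (u \<rho>hat) \<le> L * dist \<rho>bar \<rho>hat"
        using assms(12,7,13) by (intro lipschitz_onD[OF assms(12)]) auto
      then show ?thesis using assms(13) by (simp add: dist_real_def)
    qed
    ultimately show ?thesis by linarith
  qed
qed

end
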